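(* For every $T>0$ there exist constants $C=C(T)<\infty$ and $c=c(T)>0$ such that for every dyadic $N\in2^{\mathbb N}$, $$\big|\{t\in[0,T]:\ \|e^{it\Delta}\delta_N\|_{L^\infty(\mathbb T)}\le C\sqrt N\}\big|\ge c,$$ where $|\cdot|$ is Lebesgue measure.
   Context: $\mathbb T=\mathbb R/2\pi\mathbb Z$; $e^{it\Delta}$ is the Fourier multiplier $e^{-itn^2}$ on $\mathbb T$. Fix a smooth even $\varphi:\mathbb R\to[0,\infty)$ with $\varphi=1$ on $[-1,1]$ and support in $[-\frac{11}{10},\frac{11}{10}]$; $\delta_N$ is the function on $\mathbb T$ with Fourier coefficients $\hat\delta_N(n)=\varphi(n/N)$, i.e. $\delta_N(x)=\frac1{2\pi}\sum_{n\in\mathbb Z}\varphi(n/N)e^{inx}$. *)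

theory Defs
  imports "HOL-Analysis.Analysis"
begin

definition smooth_fun :: "(real \<Rightarrow> real) \<Rightarrow> bool" where
  "smooth_fun f \<longleftrightarrow> (\<forall>k x. ((deriv ^^ k) f has_real_derivative (deriv ^^ Suc k) f x) (at x))"

definition admissible_cutoff :: "(real \<Rightarrow> real) \<Rightarrow> bool" where
  "admissible_cutoff \<phi> \<longleftrightarrow> smooth_fun \<phi> \<and> (\<forall>x. \<phi> (-x) = \<phi> x) \<and> (\<forall>x. \<phi> x \<ge> 0)
     \<and> (\<forall>x. \<bar>x\<bar> \<le> 1 \<longrightarrow> \<phi> x = 1)
     \<and> (\<forall>x. \<phi> x \<noteq> 0 \<longrightarrow> \<bar>x\<bar> \<le> 11/10)"

text \<open>(e^{it\<Delta>} \<delta>_N)(x) = (1/2\<pi>) \<Sum>_{n\<in>\<int>} \<phi>(n/N) e^{-itn^2} e^{inx}.\<close>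
definition schrod_delta :: "(real \<Rightarrow> real) \<Rightarrow> real \<Rightarrow> real \<Rightarrow> real \<Rightarrow> complex" where
  "schrod_delta \<phi> N t x =
     (\<Sum>\<^sub>\<infinity>n::int. complex_of_real (\<phi> (of_int n / N)) * cis (- t * (of_int n)^2) * cis (of_int n * x))
       / complex_of_real (2 * pi)"

text \<open>L^\<infinity>(\<T>) norm (sup over a period; the functions involved are continuous trig polynomials).\<close>
definition Linf_T :: "(real \<Rightarrow> complex) \<Rightarrow> real" where
  "Linf_T f = (SUP x\<in>{0..2*pi}. norm (f x))"

end

theory Submission
  imports Defs "HOL-Analysis.Kronecker_Approximation_Theorem"
begin


definition ee :: "int \<Rightarrow> int \<Rightarrow> complex" where
  "ee q a = cis (2 * pi * of_int a / of_int q)"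

lemma ee_add: "ee q (a + b) = ee q a * ee q b"
  by (simp add: ee_def cis_mult add_divide_distrib distrib_left)

lemma ee_cnj: "cnj (ee q a) = ee q (- a)"
  by (simp add: ee_def cis_cnj)

lemma norm_ee [simp]: "norm (ee q a) = 1"
  by (simp add: ee_def)

lemma ee_mult_q: "q \<noteq> 0 \<Longrightarrow> ee q (q * k) = 1"
proof -
  assume q: "q \<noteq> 0"
  have "2 * pi * of_int (q * k) / of_int q = 2 * pi * of_int k"
    using q by (simp add: field_simps)
  thus ?thesis by (simp add: ee_def cis_multiple_2pi)
qed

lemma ee_mod: "q \<noteq> 0 \<Longrightarrow> ee q (a mod q) = ee q a"
proof -
  assume q: "q \<noteq> 0"
  have "a = a mod q + q * (a div q)" by simp
  hence "ee q a = ee q (a mod q) * ee q (q * (a div q))"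
    by (metis ee_add)
  thus ?thesis using ee_mult_q[OF q] by simp
qed

lemma ee_cong: "q \<noteq> 0 \<Longrightarrow> a mod q = b mod q \<Longrightarrow> ee q a = ee q b"
  by (metis ee_mod)

lemma ee_pow: "ee q a ^ n = ee q (int n * a)"
  unfolding ee_def Complex.DeMoivre by (simp add: algebra_simps)

lemma ee_zero [simp]: "ee q 0 = 1" by (simp add: ee_def)

lemma ortho:
  assumes q: "q > 0"
  shows "(\<Sum>j\<in>{0..<q}. ee q (j * k)) = (if q dvd k then of_int q else 0)"
proof (cases "q dvd k")
  case True
  then obtain m where "k = q * m" by auto
  hence "ee q (j * k) = 1" for j using q
    by (metis ee_mult_q mult.left_commute not_less_iff_gr_or_eq)
  thus ?thesis using True q by simp
next
  case False
  define z where "z = ee q k"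
  have z1: "z \<noteq> 1"
  proof
    assume "z = 1"
    hence "cis (2 * pi * of_int k / of_int q) = 1" by (simp add: z_def ee_def)
    then obtain i :: int where "2 * pi * of_int k / of_int q = 2 * pi * of_int i"
      by (auto simp: complex_eq_iff cos_one_2pi_int)
    hence "of_int k = (of_int (q * i) :: real)" using q by (simp add: field_simps)
    hence "k = q * i" by linarith
    thus False using False by auto
  qed
  have zq: "z ^ nat q = 1" using q by (simp add: z_def ee_pow ee_mult_q)
  have "(\<Sum>j\<in>{0..<q}. ee q (j * k)) = (\<Sum>j<nat q. z ^ j)"
  proof -
    have "(\<Sum>j<nat q. z ^ j) = (\<Sum>j<nat q. ee q (int j * k))" by (simp add: z_def ee_pow)
    also have "\<dots> = (\<Sum>j\<in>int ` {..<nat q}. ee q (j * k))"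
      by (simp add: sum.reindex)
    also have "int ` {..<nat q} = {0..<q}" using q
      by (simp add: image_atLeastZeroLessThan_int)
    finally show ?thesis by simp
  qed
  also have "\<dots> = 0" using z1 zq by (simp add: geometric_sum)
  finally show ?thesis using False by simp
qed

lemma periodic_shift:
  fixes F :: "int \<Rightarrow> complex"
  assumes q: "q > 0" and per: "\<And>k. F k = F (k mod q)"
  shows "(\<Sum>m\<in>{0..<q}. F (m + s)) = (\<Sum>m\<in>{0..<q}. F m)"
proof -
  have "(\<Sum>m\<in>{0..<q}. F (m + s)) = (\<Sum>m\<in>{0..<q}. F ((m + s) mod q))"
    using per by simp
  also have "\<dots> = (\<Sum>m\<in>{0..<q}. F m)"
    by (rule sum.reindex_bij_witness[where j = "\<lambda>m. (m + s) mod q" and i = "\<lambda>m. (m - s) mod q"])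
       (use q in \<open>auto simp: mod_add_left_eq mod_diff_left_eq\<close>)
  finally show ?thesis .
qed


lemma gauss_bound:
  assumes q: "q > 0" and cop: "coprime p q"
  shows "norm (\<Sum>m\<in>{0..<q}. ee q (- (p * m^2 + j * m))) ^ 2 \<le> 2 * q"
proof -
  define \<gamma> where "\<gamma> m = ee q (- (p * m^2 + j * m))" for m
  define G where "G = (\<Sum>m\<in>{0..<q}. \<gamma> m)"
  have per: "\<gamma> k = \<gamma> (k mod q)" for k
  proof -
    have "(- (p * k^2 + j * k)) mod q = (- (p * (k mod q)^2 + j * (k mod q))) mod q"
      by (metis mod_add_cong mod_minus_cong mod_mult_right_eq power_mod)
    thus ?thesis unfolding \<gamma>_def using q by (intro ee_cong) auto
  qed
  have prod: "\<gamma> (h + m') * cnj (\<gamma> m') = ee q (- (p * h^2 + j * h)) * ee q (m' * (- (2 * p * h)))" for h m'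
  proof -
    have "\<gamma> (h + m') * cnj (\<gamma> m') = ee q (- (p * (h+m')^2 + j * (h+m')) + (p * m'^2 + j * m'))"
      by (simp add: \<gamma>_def ee_cnj ee_add)
    also have "- (p * (h+m')^2 + j * (h+m')) + (p * m'^2 + j * m') = - (p * h^2 + j * h) + m' * (- (2 * p * h))"
      by (simp add: power2_eq_square algebra_simps)
    finally show ?thesis by (simp only: ee_add)
  qed
  have "G * cnj G = (\<Sum>m'\<in>{0..<q}. (\<Sum>m\<in>{0..<q}. \<gamma> m) * cnj (\<gamma> m'))"
    by (simp add: G_def sum_distrib_left)
  also have "\<dots> = (\<Sum>m'\<in>{0..<q}. (\<Sum>h\<in>{0..<q}. \<gamma> (h + m')) * cnj (\<gamma> m'))"
    using periodic_shift[of q \<gamma>, OF q per] by simp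
  also have "\<dots> = (\<Sum>m'\<in>{0..<q}. \<Sum>h\<in>{0..<q}. ee q (- (p * h^2 + j * h)) * ee q (m' * (- (2 * p * h))))"
    by (simp add: sum_distrib_right prod)
  also have "\<dots> = (\<Sum>h\<in>{0..<q}. ee q (- (p * h^2 + j * h)) * (\<Sum>m'\<in>{0..<q}. ee q (m' * (- (2 * p * h)))))"
    by (subst sum.swap) (simp add: sum_distrib_left)
  also have "\<dots> = (\<Sum>h\<in>{0..<q}. ee q (- (p * h^2 + j * h)) * (if q dvd (2 * h) then of_int q else 0))"
  proof (rule sum.cong[OF refl])
    fix h assume "h \<in> {0..<q}"
    have "q dvd (- (2 * p * h)) \<longleftrightarrow> q dvd (2 * h)"
    proof -
      have "q dvd (- (2 * p * h)) \<longleftrightarrow> q dvd (p * (2 * h))" by (simp add: algebra_simps)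
      also have "\<dots> \<longleftrightarrow> q dvd (2 * h)" using cop
        by (simp add: coprime_commute coprime_dvd_mult_right_iff)
      finally show ?thesis .
    qed
    thus "ee q (- (p * h^2 + j * h)) * (\<Sum>m'\<in>{0..<q}. ee q (m' * (- (2 * p * h)))) =
          ee q (- (p * h^2 + j * h)) * (if q dvd (2 * h) then of_int q else 0)"
      using ortho[OF q, of "- (2 * p * h)"] by simp
  qed
  finally have eq: "G * cnj G = \<dots>" .
  have "norm G ^ 2 = norm (G * cnj G)" by (simp add: norm_mult power2_eq_square)
  also have "\<dots> \<le> (\<Sum>h\<in>{0..<q}. norm (ee q (- (p * h^2 + j * h)) * (if q dvd (2 * h) then of_int q else 0)))"
    unfolding eq by (rule norm_sum)
  also have "\<dots> = (\<Sum>h\<in>{0..<q}. if q dvd (2*h) then real_of_int q else 0)"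
    by (intro sum.cong refl) (use q in \<open>simp add: norm_mult\<close>)
  also have "\<dots> = (\<Sum>h\<in>{h\<in>{0..<q}. q dvd (2*h)}. real_of_int q)"
    by (rule sum.inter_filter[symmetric]) simp
  also have "\<dots> = real (card {h\<in>{0..<q}. q dvd (2*h)}) * q" by simp
  also have "\<dots> \<le> 2 * q"
  proof -
    have sub: "{h\<in>{0..<q}. q dvd (2*h)} \<subseteq> {0, q div 2}"
    proof
      fix h assume h: "h \<in> {h\<in>{0..<q}. q dvd (2*h)}"
      then obtain c where c: "2 * h = q * c" by auto
      have hh: "0 \<le> h" "h < q" using h by auto
      have "0 \<le> q * c" "q * c < q * 2" using hh c by linarith+
      hence "0 \<le> c" "c < 2" using q
        by (simp_all add: zero_le_mult_iff)
      hence "c = 0 \<or> c = 1" by auto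
      thus "h \<in> {0, q div 2}" using c by auto
    qed
    have "card {h\<in>{0..<q}. q dvd (2*h)} \<le> card {0, q div 2}"
      by (rule card_mono[OF _ sub]) auto
    also have "\<dots> \<le> 2" by (simp add: card_insert_if)
    finally show ?thesis using q by (simp add: mult_right_mono)
  qed
  finally show ?thesis by (simp add: G_def \<gamma>_def)
qed

lemma dft_inversion:
  fixes g :: "int \<Rightarrow> complex"
  assumes q: "q > 0" and per: "\<And>k. g k = g (k mod q)"
  shows "g n = (\<Sum>j\<in>{0..<q}. (\<Sum>m\<in>{0..<q}. g m * ee q (- (j * m))) * ee q (j * n)) / of_int q"
proof -
  have "(\<Sum>j\<in>{0..<q}. (\<Sum>m\<in>{0..<q}. g m * ee q (- (j * m))) * ee q (j * n))
      = (\<Sum>m\<in>{0..<q}. g m * (\<Sum>j\<in>{0..<q}. ee q (j * (n - m))))"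
  proof -
    have "(\<Sum>j\<in>{0..<q}. (\<Sum>m\<in>{0..<q}. g m * ee q (- (j * m))) * ee q (j * n))
       = (\<Sum>j\<in>{0..<q}. \<Sum>m\<in>{0..<q}. g m * ee q (j * (n - m)))"
      by (intro sum.cong refl, simp add: sum_distrib_right, intro sum.cong refl)
         (simp add: mult.assoc ee_add[symmetric] algebra_simps)
    also have "\<dots> = (\<Sum>m\<in>{0..<q}. \<Sum>j\<in>{0..<q}. g m * ee q (j * (n - m)))"
      by (rule sum.swap)
    finally show ?thesis by (simp add: sum_distrib_left)
  qed
  also have "\<dots> = (\<Sum>m\<in>{0..<q}. g m * (if q dvd (n - m) then of_int q else 0))"
    by (simp add: ortho[OF q])
  also have "\<dots> = (\<Sum>m\<in>{0..<q}. (if m = n mod q then g (n mod q) * of_int q else 0))"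
  proof (rule sum.cong[OF refl])
    fix m assume m: "m \<in> {0..<q}"
    have "q dvd (n - m) \<longleftrightarrow> m = n mod q"
    proof
      assume "q dvd (n - m)"
      hence "n mod q = m mod q" by (simp add: mod_eq_dvd_iff)
      thus "m = n mod q" using m by simp
    next
      assume "m = n mod q" thus "q dvd (n - m)" by (simp add: mod_eq_dvd_iff)
    qed
    thus "g m * (if q dvd (n - m) then of_int q else 0) = (if m = n mod q then g (n mod q) * of_int q else 0)"
      by auto
  qed
  also have "\<dots> = g (n mod q) * of_int q" using q by (simp add: sum.delta')
  finally show ?thesis using q per[of n] by simp
qed


lemma shift_sum:
  fixes f :: "int \<Rightarrow> complex"
  assumes "f (-M-1) = 0" "f M = 0" "M \<ge> 0"
  shows "(\<Sum>n\<in>{-M..M}. f (n-1)) = (\<Sum>n\<in>{-M..M}. f n)"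
proof -
  have "(\<Sum>n\<in>{-M..M}. f (n-1)) = (\<Sum>m\<in>{-M-1..M-1}. f m)"
    by (rule sum.reindex_bij_witness[where i = "\<lambda>m. m+1" and j = "\<lambda>n. n-1"]) auto
  also have "\<dots> = (\<Sum>m\<in>{-M-1..M}. f m)"
  proof (rule sum.mono_neutral_left)
    have "{-M-1..M} - {-M-1..M-1} = {M}" using assms by auto
    thus "\<forall>i\<in>{-M-1..M} - {-M-1..M-1}. f i = 0" using assms by simp
  qed (use assms in auto)
  also have "\<dots> = (\<Sum>m\<in>{-M..M}. f m)"
  proof (rule sum.mono_neutral_right)
    have "{-M-1..M} - {-M..M} = {-M-1}" using assms by auto
    thus "\<forall>i\<in>{-M-1..M} - {-M..M}. f i = 0" using assms by simp
  qed (use assms in auto)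
  finally show ?thesis .
qed

lemma cis_int_shift: "cis (of_int n * y) = cis y * cis (of_int (n - 1) * y)"
  by (simp add: cis_mult algebra_simps)

lemma sbp:
  fixes w :: "int \<Rightarrow> complex"
  assumes w0: "\<And>n. \<bar>n\<bar> \<ge> M - 1 \<Longrightarrow> w n = 0" and M: "M \<ge> 0"
  shows "(1 - cis y)^2 * (\<Sum>n\<in>{-M..M}. w n * cis (of_int n * y))
       = (\<Sum>n\<in>{-M..M}. (w n - 2 * w (n-1) + w (n-2)) * cis (of_int n * y))"
proof -
  define S where "S = (\<Sum>n\<in>{-M..M}. w n * cis (of_int n * y))"
  have s1: "(\<Sum>n\<in>{-M..M}. w (n-1) * cis (of_int (n-1) * y)) = S"
    unfolding S_def by (rule shift_sum[where f = "\<lambda>n. w n * cis (of_int n * y)"]) (use w0 M in auto)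
  have s2: "(\<Sum>n\<in>{-M..M}. w (n-2) * cis (of_int (n-2) * y)) = S"
  proof -
    have "(\<Sum>n\<in>{-M..M}. w (n-1-1) * cis (of_int (n-1-1) * y)) = (\<Sum>n\<in>{-M..M}. w (n-1) * cis (of_int (n-1) * y))"
      by (rule shift_sum[where f = "\<lambda>n. w (n-1) * cis (of_int (n-1) * y)"]) (use w0 M in auto)
    thus ?thesis using s1 by (simp add: algebra_simps)
  qed
  have t1: "(\<Sum>n\<in>{-M..M}. w (n-1) * cis (of_int n * y)) = cis y * S"
    unfolding s1[symmetric] sum_distrib_left
    by (intro sum.cong refl) (simp add: cis_mult algebra_simps)
  have t2: "(\<Sum>n\<in>{-M..M}. w (n-2) * cis (of_int n * y)) = cis y ^ 2 * S"
    unfolding s2[symmetric] sum_distrib_left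
    by (intro sum.cong refl) (simp add: cis_mult power2_eq_square algebra_simps)
  have "(\<Sum>n\<in>{-M..M}. (w n - 2 * w (n-1) + w (n-2)) * cis (of_int n * y))
      = S - 2 * (\<Sum>n\<in>{-M..M}. w (n-1) * cis (of_int n * y)) + (\<Sum>n\<in>{-M..M}. w (n-2) * cis (of_int n * y))"
    by (simp add: S_def algebra_simps sum.distrib sum_subtractf sum_distrib_left)
  also have "\<dots> = (1 - cis y)^2 * S" unfolding t1 t2 by (simp add: power2_eq_square algebra_simps)
  finally show ?thesis by (simp add: S_def)
qed


lemma second_diff:
  fixes g g1 g2 :: "real \<Rightarrow> real"
  assumes d1: "\<And>s. (g has_real_derivative g1 s) (at s)"
      and d2: "\<And>s. (g1 has_real_derivative g2 s) (at s)"
      and bd: "\<And>s. n - 2 \<le> s \<Longrightarrow> s \<le> n \<Longrightarrow> \<bar>g2 s\<bar> \<le> L"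
  shows "\<bar>g n - 2 * g (n-1) + g (n-2)\<bar> \<le> L"
proof -
  define h where "h s = g s - g (s - 1)" for s
  have dh: "(h has_real_derivative (g1 s - g1 (s-1))) (at s)" for s
    unfolding h_def by (auto intro!: derivative_eq_intros d1[THEN DERIV_chain2] d1)
  obtain z where z: "n - 1 < z" "z < n" "h n - h (n-1) = (n - (n-1)) * (g1 z - g1 (z-1))"
    using MVT2[of "n-1" n h "\<lambda>s. g1 s - g1 (s-1)"] dh by auto
  obtain \<zeta> where \<zeta>: "z - 1 < \<zeta>" "\<zeta> < z" "g1 z - g1 (z-1) = (z - (z-1)) * g2 \<zeta>"
    using MVT2[of "z-1" z g1 g2] d2 by auto
  have "g n - 2 * g (n-1) + g (n-2) = g2 \<zeta>"
    using z(3) \<zeta>(3) by (simp add: h_def algebra_simps)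
  thus ?thesis using bd[of \<zeta>] z \<zeta> by auto
qed

lemma sin_lower: assumes "0 \<le> u" "u \<le> pi/2" shows "sin u \<ge> u/3"
proof -
  have "\<bar>sin u - u\<bar> \<le> u^3/6"
    using Maclaurin_sin_bound[of u 3] assms by (simp add: sin_coeff_def eval_nat_numeral)
  moreover have "u^3/6 \<le> 2*u/3"
  proof -
    have u2: "u \<le> 2" using assms pi_less_4 by linarith
    have "u^2 \<le> 2^2" using assms u2 by (intro power_mono) auto
    hence "u * u^2 \<le> u * 4" using assms by (intro mult_left_mono) auto
    thus ?thesis by (simp add: power3_eq_cube power2_eq_square)
  qed
  ultimately show ?thesis by linarith
qed

lemma norm_1_cis_lower:
  assumes "\<bar>\<theta>\<bar> \<le> pi"
  shows "norm (1 - cis \<theta>) \<ge> \<bar>\<theta>\<bar> / 3"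
proof -
  have "norm (1 - cis \<theta>) ^ 2 = (1 - cos \<theta>)^2 + (sin \<theta>)^2"
    by (simp add: cmod_def)
  also have "\<dots> = 2 - 2 * cos \<theta>"
    using sin_cos_squared_add[of \<theta>] by (simp add: power2_eq_square algebra_simps)
  also have "\<dots> = 4 * sin (\<bar>\<theta>\<bar>/2) ^ 2"
    using cos_double_sin[of "\<bar>\<theta>\<bar>/2"] by simp
  finally have eq: "norm (1 - cis \<theta>) ^ 2 = (2 * sin (\<bar>\<theta>\<bar>/2))^2" by (simp add: power_mult_distrib)
  have s0: "sin (\<bar>\<theta>\<bar>/2) \<ge> \<bar>\<theta>\<bar>/6"
    using sin_lower[of "\<bar>\<theta>\<bar>/2"] assms by auto
  hence "norm (1 - cis \<theta>) = 2 * sin (\<bar>\<theta>\<bar>/2)"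
  proof -
    have "0 \<le> 2 * sin (\<bar>\<theta>\<bar>/2)" using s0 abs_ge_zero[of \<theta>] by linarith
    thus ?thesis using eq power2_eq_iff_nonneg[of "norm (1 - cis \<theta>)" "2 * sin (\<bar>\<theta>\<bar>/2)"] by simp
  qed
  thus ?thesis using s0 by simp
qed


lemma inv_sq_sum: "(\<Sum>l\<in>{1..n}. 1 / (real l)^2) \<le> 2 - 1 / real (max n 1)"
proof (induction n)
  case 0 thus ?case by simp
next
  case (Suc n)
  show ?case
  proof (cases "n = 0")
    case True thus ?thesis by simp
  next
    case False
    have "(\<Sum>l\<in>{1..Suc n}. 1 / (real l)^2) = (\<Sum>l\<in>{1..n}. 1 / (real l)^2) + 1 / (real (Suc n))^2"
      by simp
    also have "\<dots> \<le> 2 - 1 / real n + 1 / (real (Suc n))^2"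
      using Suc False by simp
    also have "\<dots> \<le> 2 - 1 / real (Suc n)"
    proof -
      have n: "real n \<ge> 1" using False by simp
      have e: "1 / real n - 1 / real (Suc n) = 1 / (real n * real (Suc n))"
        using n by (simp add: field_simps)
      have "1 / (real (Suc n))^2 \<le> 1 / (real n * real (Suc n))"
        using n by (intro divide_left_mono) (auto simp: power2_eq_square intro!: mult_right_mono)
      hence "1 / (real (Suc n))^2 \<le> 1 / real n - 1 / real (Suc n)" using e by simp
      thus ?thesis by simp
    qed
    finally show ?thesis by simp
  qed
qed

lemma inv_sq_sum_set:
  assumes "finite L"
  shows "(\<Sum>l\<in>L - {0}. 1 / (real l)^2) \<le> 2"
proof -
  have "L - {0} \<subseteq> {1..Max (insert 0 L)}"
    using assms by (auto intro: Max_ge)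
  hence "(\<Sum>l\<in>L - {0}. 1 / (real l)^2) \<le> (\<Sum>l\<in>{1..Max (insert 0 L)}. 1 / (real l)^2)"
    by (intro sum_mono2) auto
  also have "\<dots> \<le> 2"
  proof -
    have "0 \<le> 1 / real (max (Max (insert 0 L)) 1)" by simp
    thus ?thesis using inv_sq_sum[of "Max (insert 0 L)"] by linarith
  qed
  finally show ?thesis .
qed

lemma fiber_sum:
  fixes F :: "int \<Rightarrow> real" and q :: int and v0 A D :: real
  defines "r \<equiv> \<lambda>j. v0 + of_int j - of_int q * of_int \<lfloor>(v0 + of_int j) / of_int q + 1/2\<rfloor>"
  assumes q: "q > 0" and F0: "\<And>j. 0 \<le> F j" and FA: "\<And>j. F j \<le> A"
      and FD: "\<And>j. r j \<noteq> 0 \<Longrightarrow> F j \<le> D / (r j)^2" and D: "D \<ge> 0"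
  shows "(\<Sum>j\<in>{0..<q}. F j) \<le> 2 * A + 4 * D"
proof -
  define k where "k j = \<lfloor>(v0 + of_int j) / of_int q + 1/2\<rfloor>" for j
  have r_def': "r j = v0 + of_int j - of_int q * of_int (k j)" for j by (simp add: r_def k_def)
  define J where "J = {0..<q}"
  define lv where "lv j = nat \<lfloor>\<bar>r j\<bar>\<rfloor>" for j
  have close: "j1 = j2" if j: "j1 \<in> J" "j2 \<in> J" and d: "\<bar>r j1 - r j2\<bar> < 1" for j1 j2
  proof -
    have eq: "r j1 - r j2 = of_int ((j1 - j2) - q * (k j1 - k j2))"
      by (simp add: r_def' algebra_simps)
    have "\<bar>(j1 - j2) - q * (k j1 - k j2)\<bar> < 1"
      using d unfolding eq by linarith
    hence z: "j1 - j2 = q * (k j1 - k j2)" by linarith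
    have "\<bar>j1 - j2\<bar> < q" using j by (auto simp: J_def)
    hence "\<bar>q * (k j1 - k j2)\<bar> < q * 1" using z by simp
    hence "\<bar>k j1 - k j2\<bar> < 1" using q by (simp add: abs_mult)
    hence "k j1 = k j2" by linarith
    thus ?thesis using z by simp
  qed
  have card_le1: "card {j\<in>J. P j \<and> \<lfloor>s j\<rfloor> = c} \<le> 1"
    if sr: "\<And>j. P j \<Longrightarrow> s j = r j \<or> s j = - r j" and sgn: "\<And>j1 j2. P j1 \<Longrightarrow> P j2 \<Longrightarrow> (s j1 = r j1) = (s j2 = r j2)"
    for P s c
  proof -
    have fS: "finite {j\<in>J. P j \<and> \<lfloor>s j\<rfloor> = c}" by (rule finite_subset[of _ J]) (auto simp: J_def)
    have "\<forall>x\<in>{j\<in>J. P j \<and> \<lfloor>s j\<rfloor> = c}. \<forall>y\<in>{j\<in>J. P j \<and> \<lfloor>s j\<rfloor> = c}. x = y"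
    proof (intro ballI)
      fix x y assume x: "x \<in> {j\<in>J. P j \<and> \<lfloor>s j\<rfloor> = c}" and y: "y \<in> {j\<in>J. P j \<and> \<lfloor>s j\<rfloor> = c}"
      have fx: "\<lfloor>s x\<rfloor> = c" and fy: "\<lfloor>s y\<rfloor> = c" using x y by auto
      have "of_int c \<le> s x \<and> s x < of_int c + 1" using fx floor_correct[of "s x"] by simp
      moreover have "of_int c \<le> s y \<and> s y < of_int c + 1" using fy floor_correct[of "s y"] by simp
      ultimately have "\<bar>s x - s y\<bar> < 1" by linarith
      moreover have "\<bar>s x - s y\<bar> = \<bar>r x - r y\<bar>"
        using sr[of x] sr[of y] sgn[of x y] x y by auto
      ultimately show "x = y" using close x y by auto
    qed
    thus ?thesis using card_le_Suc0_iff_eq[OF fS] by simp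
  qed
  have fib_card: "card {j\<in>J. lv j = l} \<le> 2" for l
  proof -
    have sub: "{j\<in>J. lv j = l} \<subseteq> {j\<in>J. r j \<ge> 0 \<and> \<lfloor>r j\<rfloor> = int l} \<union> {j\<in>J. r j < 0 \<and> \<lfloor>- r j\<rfloor> = int l}"
      by (auto simp: lv_def)
    have c1: "card {j\<in>J. r j \<ge> 0 \<and> \<lfloor>r j\<rfloor> = int l} \<le> 1"
      by (rule card_le1) auto
    have c2: "card {j\<in>J. r j < 0 \<and> \<lfloor>- r j\<rfloor> = int l} \<le> 1"
      by (rule card_le1) auto
    have "card {j\<in>J. lv j = l} \<le> card ({j\<in>J. r j \<ge> 0 \<and> \<lfloor>r j\<rfloor> = int l} \<union> {j\<in>J. r j < 0 \<and> \<lfloor>- r j\<rfloor> = int l})"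
      by (rule card_mono[OF _ sub]) (auto intro: finite_subset[of _ J] simp: J_def)
    also have "\<dots> \<le> card {j\<in>J. r j \<ge> 0 \<and> \<lfloor>r j\<rfloor> = int l} + card {j\<in>J. r j < 0 \<and> \<lfloor>- r j\<rfloor> = int l}"
      by (rule card_Un_le)
    finally show ?thesis using c1 c2 by linarith
  qed
  define bnd where "bnd l = (if l = 0 then A else D / (real l)^2)" for l
  have Fb: "F j \<le> bnd (lv j)" for j
  proof (cases "lv j = 0")
    case True thus ?thesis using FA by (simp add: bnd_def)
  next
    case False
    hence l1: "real (lv j) \<le> \<bar>r j\<bar>" "real (lv j) \<ge> 1" unfolding lv_def by linarith+
    hence "r j \<noteq> 0" by auto
    hence "F j \<le> D / (r j)^2" by (rule FD)
    also have "\<dots> \<le> D / (real (lv j))^2"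
    proof -
      have "(real (lv j))^2 \<le> (r j)^2" using l1 by (metis power2_abs power_mono of_nat_0_le_iff)
      thus ?thesis using l1 D by (intro divide_left_mono) auto
    qed
    finally show ?thesis using False by (simp add: bnd_def)
  qed
  have fin: "finite J" by (simp add: J_def)
  have "(\<Sum>j\<in>J. F j) = (\<Sum>l\<in>lv ` J. \<Sum>j\<in>{j\<in>J. lv j = l}. F j)"
    by (rule sum.image_gen[OF fin])
  also have "\<dots> \<le> (\<Sum>l\<in>lv ` J. 2 * bnd l)"
  proof (rule sum_mono)
    fix l assume "l \<in> lv ` J"
    have "(\<Sum>j\<in>{j\<in>J. lv j = l}. F j) \<le> (\<Sum>j\<in>{j\<in>J. lv j = l}. bnd l)"
      by (rule sum_mono) (use Fb in auto)
    also have "\<dots> = card {j\<in>J. lv j = l} * bnd l" by simp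
    also have "\<dots> \<le> 2 * bnd l"
    proof -
      have "0 \<le> bnd l" using F0 FA D by (auto simp: bnd_def intro: order_trans)
      thus ?thesis using fib_card[of l] by (intro mult_right_mono) auto
    qed
    finally show "(\<Sum>j\<in>{j\<in>J. lv j = l}. F j) \<le> 2 * bnd l" .
  qed
  also have "\<dots> = 2 * (\<Sum>l\<in>lv ` J. bnd l)" by (simp add: sum_distrib_left)
  also have "(\<Sum>l\<in>lv ` J. bnd l) \<le> A + 2 * D"
  proof -
    have A0: "A \<ge> 0" using F0 FA order_trans by blast
    have "(\<Sum>l\<in>lv ` J. bnd l) = (\<Sum>l\<in>lv ` J \<inter> {0}. bnd l) + (\<Sum>l\<in>lv ` J - {0}. bnd l)"
      using fin by (metis Diff_eq finite_imageI sum.Int_Diff)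
    also have "(\<Sum>l\<in>lv ` J \<inter> {0}. bnd l) \<le> A"
      using A0 by (cases "0 \<in> lv ` J") (auto simp: bnd_def Int_insert_right)
    also have "(\<Sum>l\<in>lv ` J - {0}. bnd l) = D * (\<Sum>l\<in>lv ` J - {0}. 1 / (real l)^2)"
      by (simp add: bnd_def sum_distrib_left)
    also have "\<dots> \<le> D * 2" using inv_sq_sum_set[of "lv ` J"] fin D by (intro mult_left_mono) auto
    finally show ?thesis by simp
  qed
  finally show ?thesis by (simp add: J_def)
qed


lemma adm_deriv:
  assumes "admissible_cutoff \<phi>"
  shows "\<And>x. (\<phi> has_real_derivative deriv \<phi> x) (at x)"
    and "\<And>x. (deriv \<phi> has_real_derivative deriv (deriv \<phi>) x) (at x)"
    and "\<And>x. (deriv (deriv \<phi>) has_real_derivative deriv (deriv (deriv \<phi>)) x) (at x)"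
proof -
  have s: "smooth_fun \<phi>" using assms by (simp add: admissible_cutoff_def)
  note s' = s[unfolded smooth_fun_def, rule_format]
  show "\<And>x. (\<phi> has_real_derivative deriv \<phi> x) (at x)"
    using s'[of 0] by simp
  show "\<And>x. (deriv \<phi> has_real_derivative deriv (deriv \<phi>) x) (at x)"
    using s'[of 1] by simp
  show "\<And>x. (deriv (deriv \<phi>) has_real_derivative deriv (deriv (deriv \<phi>)) x) (at x)"
    using s'[of 2] by (simp add: numeral_2_eq_2)
qed

lemma adm_bound:
  assumes "admissible_cutoff \<phi>"
  obtains M where "M \<ge> 0" "\<And>x. \<bar>x\<bar> \<le> 8 \<Longrightarrow> \<bar>\<phi> x\<bar> \<le> M \<and> \<bar>deriv \<phi> x\<bar> \<le> M \<and> \<bar>deriv (deriv \<phi>) x\<bar> \<le> M"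
proof -
  note d = adm_deriv[OF assms]
  have c0: "continuous_on {-8..8} \<phi>"
    using d(1) by (intro continuous_at_imp_continuous_on) (auto intro: DERIV_isCont)
  have c1: "continuous_on {-8..8} (deriv \<phi>)"
    using d(2) by (intro continuous_at_imp_continuous_on) (auto intro: DERIV_isCont)
  have c2: "continuous_on {-8..8} (deriv (deriv \<phi>))"
    using d(3) by (intro continuous_at_imp_continuous_on) (auto intro: DERIV_isCont)
  obtain B0 where B0: "\<And>x. x \<in> {-8..8} \<Longrightarrow> norm (\<phi> x) \<le> B0"
    using continuous_on_compact_bound[OF compact_Icc c0] by blast
  obtain B1 where B1: "\<And>x. x \<in> {-8..8} \<Longrightarrow> norm (deriv \<phi> x) \<le> B1"
    using continuous_on_compact_bound[OF compact_Icc c1] by blast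
  obtain B2 where B2: "\<And>x. x \<in> {-8..8} \<Longrightarrow> norm (deriv (deriv \<phi>) x) \<le> B2"
    using continuous_on_compact_bound[OF compact_Icc c2] by blast
  show ?thesis
  proof (rule that[of "max (max B0 B1) (max B2 0)"])
    fix x :: real assume "\<bar>x\<bar> \<le> 8"
    hence "x \<in> {-8..8}" by auto
    thus "\<bar>\<phi> x\<bar> \<le> max (max B0 B1) (max B2 0) \<and> \<bar>deriv \<phi> x\<bar> \<le> max (max B0 B1) (max B2 0)
          \<and> \<bar>deriv (deriv \<phi>) x\<bar> \<le> max (max B0 B1) (max B2 0)"
      using B0 B1 B2 by fastforce
  qed auto
qed

lemma deriv_cos_prod:
  fixes a a1 :: "real \<Rightarrow> real"
  assumes "\<And>s. (a has_real_derivative a1 s) (at s)"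
  shows "((\<lambda>s. a s * cos (\<beta> * s^2)) has_real_derivative (a1 s * cos (\<beta> * s^2) - a s * (sin (\<beta> * s^2) * (2 * \<beta> * s)))) (at s)"
  by (auto intro!: derivative_eq_intros assms simp: algebra_simps)

lemma deriv_sin_prod:
  fixes a a1 :: "real \<Rightarrow> real"
  assumes "\<And>s. (a has_real_derivative a1 s) (at s)"
  shows "((\<lambda>s. a s * sin (\<beta> * s^2)) has_real_derivative (a1 s * sin (\<beta> * s^2) + a s * (cos (\<beta> * s^2) * (2 * \<beta> * s)))) (at s)"
  by (auto intro!: derivative_eq_intros assms simp: algebra_simps)

lemma deriv2_cos_prod:
  fixes a a1 a2 :: "real \<Rightarrow> real"
  assumes "\<And>s. (a has_real_derivative a1 s) (at s)" "\<And>s. (a1 has_real_derivative a2 s) (at s)"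
  shows "((\<lambda>s. a1 s * cos (\<beta> * s^2) - a s * (sin (\<beta> * s^2) * (2 * \<beta> * s))) has_real_derivative
     (a2 s * cos (\<beta> * s^2) - a1 s * (sin (\<beta> * s^2) * (2 * \<beta> * s))
      - (a1 s * (sin (\<beta> * s^2) * (2 * \<beta> * s)) + a s * (cos (\<beta> * s^2) * (2 * \<beta> * s) * (2 * \<beta> * s) + sin (\<beta> * s^2) * (2 * \<beta>))))) (at s)"
  by (auto intro!: derivative_eq_intros assms simp: algebra_simps)

lemma deriv2_sin_prod:
  fixes a a1 a2 :: "real \<Rightarrow> real"
  assumes "\<And>s. (a has_real_derivative a1 s) (at s)" "\<And>s. (a1 has_real_derivative a2 s) (at s)"
  shows "((\<lambda>s. a1 s * sin (\<beta> * s^2) + a s * (cos (\<beta> * s^2) * (2 * \<beta> * s))) has_real_derivative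
     (a2 s * sin (\<beta> * s^2) + a1 s * (cos (\<beta> * s^2) * (2 * \<beta> * s))
      + (a1 s * (cos (\<beta> * s^2) * (2 * \<beta> * s)) + a s * (- sin (\<beta> * s^2) * (2 * \<beta> * s) * (2 * \<beta> * s) + cos (\<beta> * s^2) * (2 * \<beta>))))) (at s)"
  by (auto intro!: derivative_eq_intros assms simp: algebra_simps)


lemma arith_bd:
  fixes A0 A1 A2 E0 F0 u1 u2 u3 u4 u5 X Y E Z F :: real
  assumes "\<bar>A2\<bar> \<le> X" "\<bar>A1\<bar> \<le> Y" "\<bar>E0\<bar> \<le> E" "\<bar>A0\<bar> \<le> Z" "\<bar>F0\<bar> \<le> F"
    "\<bar>u1\<bar> \<le> 1" "\<bar>u2\<bar> \<le> 1" "\<bar>u3\<bar> \<le> 1" "\<bar>u4\<bar> \<le> 1" "\<bar>u5\<bar> \<le> 1"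
  shows "\<bar>A2*u1 + A1*u2*E0 + A1*u3*E0 + A0*(u4*E0*E0 + u5*F0)\<bar> \<le> X + 2*Y*E + Z*(E*E + F)"
proof -
  have nn: "0 \<le> X" "0 \<le> Y" "0 \<le> E" "0 \<le> Z" "0 \<le> F"
    using assms(1-5) abs_ge_zero[of A2] abs_ge_zero[of A1] abs_ge_zero[of E0] abs_ge_zero[of A0] abs_ge_zero[of F0]
    by linarith+
  have 1: "\<bar>A2*u1\<bar> \<le> X * 1" unfolding abs_mult
    by (rule mult_mono[OF assms(1) assms(6) nn(1) abs_ge_zero])
  have m2: "\<bar>A1\<bar> * \<bar>u2\<bar> \<le> Y * 1" by (rule mult_mono[OF assms(2) assms(7) nn(2) abs_ge_zero])
  have 2: "\<bar>A1*u2*E0\<bar> \<le> Y * 1 * E" unfolding abs_mult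
    by (rule mult_mono[OF m2 assms(3)]) (use nn in auto)
  have m3: "\<bar>A1\<bar> * \<bar>u3\<bar> \<le> Y * 1" by (rule mult_mono[OF assms(2) assms(8) nn(2) abs_ge_zero])
  have 3: "\<bar>A1*u3*E0\<bar> \<le> Y * 1 * E" unfolding abs_mult
    by (rule mult_mono[OF m3 assms(3)]) (use nn in auto)
  have m4: "\<bar>u4\<bar> * \<bar>E0\<bar> \<le> 1 * E" by (rule mult_mono[OF assms(9) assms(3)]) (use nn in auto)
  have 4: "\<bar>u4*E0*E0\<bar> \<le> 1 * E * E" unfolding abs_mult
    by (rule mult_mono[OF m4 assms(3)]) (use nn in auto)
  have 5: "\<bar>u5*F0\<bar> \<le> 1 * F" unfolding abs_mult
    by (rule mult_mono[OF assms(10) assms(5)]) (use nn in auto)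
  have "\<bar>u4*E0*E0 + u5*F0\<bar> \<le> E * E + F" using 4 5 abs_triangle_ineq[of "u4*E0*E0" "u5*F0"] by linarith
  hence 6: "\<bar>A0*(u4*E0*E0 + u5*F0)\<bar> \<le> Z * (E * E + F)"
    unfolding abs_mult by (rule mult_mono[OF assms(4)]) (use nn in auto)
  have t: "\<bar>A2*u1 + A1*u2*E0 + A1*u3*E0 + A0*(u4*E0*E0 + u5*F0)\<bar> \<le>
     \<bar>A2*u1\<bar> + \<bar>A1*u2*E0\<bar> + \<bar>A1*u3*E0\<bar> + \<bar>A0*(u4*E0*E0 + u5*F0)\<bar>" by linarith
  show ?thesis using t 1 2 3 6 by linarith
qed

context
  fixes \<phi> :: "real \<Rightarrow> real" and N \<beta> b M :: real
  assumes adm: "admissible_cutoff \<phi>" and N1: "N \<ge> 1" and bb: "\<bar>\<beta>\<bar> * N^2 \<le> b" "b \<ge> 0"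
      and M0: "M \<ge> 0" and Mb: "\<And>x. \<bar>x\<bar> \<le> 8 \<Longrightarrow> \<bar>\<phi> x\<bar> \<le> M \<and> \<bar>deriv \<phi> x\<bar> \<le> M \<and> \<bar>deriv (deriv \<phi>) x\<bar> \<le> M"
begin

definition "Mi = \<lceil>2 * N\<rceil> + 3"
definition "ww n = complex_of_real (\<phi> (of_int n / N)) * cis (- (\<beta> * (of_int n)^2))"
definition "LL = M * (1 + 34 * b + 256 * b^2)"

lemma phi_zero: "\<bar>x\<bar> > 11/10 \<Longrightarrow> \<phi> x = 0"
  using adm unfolding admissible_cutoff_def by force

lemma phi_bound: "\<bar>\<phi> x\<bar> \<le> M"
  using Mb[of x] phi_zero[of x] M0 by (cases "\<bar>x\<bar> \<le> 8") auto

lemma Mi_ge: "Mi \<ge> 0" "real_of_int Mi \<le> 2 * N + 4" "2 * real_of_int Mi + 1 \<le> 13 * N"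
proof -
  have c: "real_of_int \<lceil>2 * N\<rceil> \<le> 2 * N + 1" "real_of_int \<lceil>2 * N\<rceil> \<ge> 2 * N"
    using ceiling_correct[of "2 * N"] by linarith+
  have e: "real_of_int Mi = real_of_int \<lceil>2 * N\<rceil> + 3" unfolding Mi_def by simp
  show "Mi \<ge> 0" using N1 unfolding Mi_def by linarith
  show "real_of_int Mi \<le> 2 * N + 4" using c e by linarith
  show "2 * real_of_int Mi + 1 \<le> 13 * N" using c e N1 by linarith
qed

lemma ww_zero: "\<bar>n\<bar> \<ge> Mi - 1 \<Longrightarrow> ww n = 0"
proof -
  assume n: "\<bar>n\<bar> \<ge> Mi - 1"
  have "real_of_int \<bar>n\<bar> \<ge> 2 * N + 2" using n N1 unfolding Mi_def by linarith
  hence "\<bar>of_int n / N\<bar> > 11/10" using N1 by (simp add: field_simps)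
  thus ?thesis by (simp add: ww_def phi_zero)
qed

lemma norm_ww: "norm (ww n) \<le> M"
  by (simp add: ww_def norm_mult phi_bound)

lemma S_boundA: "norm (\<Sum>n\<in>{-Mi..Mi}. ww n * cis (of_int n * y)) \<le> 13 * N * M"
proof -
  have "norm (\<Sum>n\<in>{-Mi..Mi}. ww n * cis (of_int n * y)) \<le> (\<Sum>n\<in>{-Mi..Mi}. M)"
    by (rule order_trans[OF norm_sum sum_mono]) (simp add: norm_mult norm_ww)
  also have "\<dots> = (2 * real_of_int Mi + 1) * M" using Mi_ge(1) by simp
  also have "\<dots> \<le> 13 * N * M" using Mi_ge(3) M0 by (intro mult_right_mono) auto
  finally show ?thesis .
qed


lemma LL_nonneg: "LL \<ge> 0" unfolding LL_def using M0 bb by simp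

lemma trig_diff_bound:
  fixes c :: "real \<Rightarrow> real" and n :: int
  assumes n: "n \<in> {-Mi..Mi}"
  defines "a \<equiv> \<lambda>s. \<phi> (s / N)"
  shows "\<bar>a (of_int n) * cos (\<beta> * (of_int n)^2) - 2 * (a (of_int n - 1) * cos (\<beta> * (of_int n - 1)^2))
           + a (of_int n - 2) * cos (\<beta> * (of_int n - 2)^2)\<bar> \<le> LL / N^2"
    and "\<bar>a (of_int n) * sin (\<beta> * (of_int n)^2) - 2 * (a (of_int n - 1) * sin (\<beta> * (of_int n - 1)^2))
           + a (of_int n - 2) * sin (\<beta> * (of_int n - 2)^2)\<bar> \<le> LL / N^2"
proof -
  note d = adm_deriv[OF adm]
  define a1 where "a1 = (\<lambda>s. deriv \<phi> (s / N) * (1 / N))"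
  define a2 where "a2 = (\<lambda>s. deriv (deriv \<phi>) (s / N) * (1 / N) * (1 / N))"
  have da: "(a has_real_derivative a1 s) (at s)" for s
    unfolding a_def a1_def by (rule DERIV_chain2[OF d(1)]) (use N1 in \<open>auto intro!: derivative_eq_intros\<close>)
  have da1: "(a1 has_real_derivative a2 s) (at s)" for s
  proof -
    have "((\<lambda>s. deriv \<phi> (s / N)) has_real_derivative deriv (deriv \<phi>) (s / N) * (1 / N)) (at s)"
      by (rule DERIV_chain2[OF d(2)]) (use N1 in \<open>auto intro!: derivative_eq_intros\<close>)
    from DERIV_cmult_right[OF this, of "1/N"] show ?thesis by (simp add: a1_def a2_def)
  qed
  have N0: "N > 0" using N1 by simp
  have beta: "\<bar>\<beta>\<bar> \<le> b / N^2" using bb N0 by (simp add: field_simps)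
  have sb: "\<bar>s\<bar> \<le> 8 * N" if "of_int n - 2 \<le> s" "s \<le> of_int n" for s
    using n that Mi_ge N1 by auto
  have bnds: "\<bar>a2 s\<bar> \<le> M / N^2 \<and> \<bar>a1 s\<bar> \<le> M / N \<and> \<bar>a s\<bar> \<le> M \<and> \<bar>2 * \<beta> * s\<bar> \<le> 16 * b / N \<and> \<bar>2 * \<beta>\<bar> \<le> 2 * b / N^2"
    if "of_int n - 2 \<le> s" "s \<le> of_int n" for s
  proof -
    have s8: "\<bar>s / N\<bar> \<le> 8" using sb[OF that] N0 by (simp add: abs_div divide_le_eq)
    have m: "\<bar>\<phi> (s/N)\<bar> \<le> M" "\<bar>deriv \<phi> (s/N)\<bar> \<le> M" "\<bar>deriv (deriv \<phi>) (s/N)\<bar> \<le> M"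
      using Mb[OF s8] by auto
    have "\<bar>a2 s\<bar> = \<bar>deriv (deriv \<phi>) (s/N)\<bar> / N^2" unfolding a2_def using N0
      by (simp add: abs_mult power2_eq_square)
    also have "\<dots> \<le> M / N^2" using m N0 by (intro divide_right_mono) auto
    finally have 1: "\<bar>a2 s\<bar> \<le> M / N^2" .
    have "\<bar>a1 s\<bar> = \<bar>deriv \<phi> (s/N)\<bar> / N" unfolding a1_def using N0 by (simp add: abs_mult)
    also have "\<dots> \<le> M / N" using m N0 by (intro divide_right_mono) auto
    finally have 2: "\<bar>a1 s\<bar> \<le> M / N" .
    have 3: "\<bar>a s\<bar> \<le> M" using m by (simp add: a_def)
    have "\<bar>2 * \<beta> * s\<bar> = 2 * \<bar>\<beta>\<bar> * \<bar>s\<bar>" by (simp add: abs_mult)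
    also have "\<dots> \<le> 2 * (b / N^2) * (8 * N)"
      using beta sb[OF that] by (intro mult_mono) auto
    also have "\<dots> = 16 * b / N" using N0 by (simp add: field_simps power2_eq_square)
    finally have 4: "\<bar>2 * \<beta> * s\<bar> \<le> 16 * b / N" .
    have 5: "\<bar>2 * \<beta>\<bar> \<le> 2 * b / N^2" using beta by simp
    show ?thesis using 1 2 3 4 5 by blast
  qed
  have LLe: "M / N^2 + 2 * (M / N) * (16 * b / N) + M * ((16 * b / N) * (16 * b / N) + 2 * b / N^2) = LL / N^2"
    unfolding LL_def using N0 by (simp add: field_simps power2_eq_square)
  show "\<bar>a (of_int n) * cos (\<beta> * (of_int n)^2) - 2 * (a (of_int n - 1) * cos (\<beta> * (of_int n - 1)^2))
           + a (of_int n - 2) * cos (\<beta> * (of_int n - 2)^2)\<bar> \<le> LL / N^2"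
  proof (rule second_diff[OF deriv_cos_prod[OF da] deriv2_cos_prod[OF da da1]])
    fix s :: real assume s: "of_int n - 2 \<le> s" "s \<le> of_int n"
    note B = bnds[OF s]
    have "\<bar>a2 s * cos (\<beta> * s^2) + a1 s * (- sin (\<beta> * s^2)) * (2 * \<beta> * s) + a1 s * (- sin (\<beta> * s^2)) * (2 * \<beta> * s)
          + a s * ((- cos (\<beta> * s^2)) * (2 * \<beta> * s) * (2 * \<beta> * s) + (- sin (\<beta> * s^2)) * (2 * \<beta>))\<bar>
          \<le> M / N^2 + 2 * (M / N) * (16 * b / N) + M * ((16 * b / N) * (16 * b / N) + 2 * b / N^2)"
      by (rule arith_bd) (use B in auto)
    thus "\<bar>a2 s * cos (\<beta> * s^2) - a1 s * (sin (\<beta> * s^2) * (2 * \<beta> * s))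
      - (a1 s * (sin (\<beta> * s^2) * (2 * \<beta> * s)) + a s * (cos (\<beta> * s^2) * (2 * \<beta> * s) * (2 * \<beta> * s) + sin (\<beta> * s^2) * (2 * \<beta>)))\<bar> \<le> LL / N^2"
      unfolding LLe[symmetric] by (simp add: algebra_simps)
  qed
  show "\<bar>a (of_int n) * sin (\<beta> * (of_int n)^2) - 2 * (a (of_int n - 1) * sin (\<beta> * (of_int n - 1)^2))
           + a (of_int n - 2) * sin (\<beta> * (of_int n - 2)^2)\<bar> \<le> LL / N^2"
  proof (rule second_diff[OF deriv_sin_prod[OF da] deriv2_sin_prod[OF da da1]])
    fix s :: real assume s: "of_int n - 2 \<le> s" "s \<le> of_int n"
    note B = bnds[OF s]
    have "\<bar>a2 s * sin (\<beta> * s^2) + a1 s * cos (\<beta> * s^2) * (2 * \<beta> * s) + a1 s * cos (\<beta> * s^2) * (2 * \<beta> * s)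
          + a s * ((- sin (\<beta> * s^2)) * (2 * \<beta> * s) * (2 * \<beta> * s) + cos (\<beta> * s^2) * (2 * \<beta>))\<bar>
          \<le> M / N^2 + 2 * (M / N) * (16 * b / N) + M * ((16 * b / N) * (16 * b / N) + 2 * b / N^2)"
      by (rule arith_bd) (use B in auto)
    thus "\<bar>a2 s * sin (\<beta> * s^2) + a1 s * (cos (\<beta> * s^2) * (2 * \<beta> * s))
      + (a1 s * (cos (\<beta> * s^2) * (2 * \<beta> * s)) + a s * (- sin (\<beta> * s^2) * (2 * \<beta> * s) * (2 * \<beta> * s) + cos (\<beta> * s^2) * (2 * \<beta>)))\<bar> \<le> LL / N^2"
      unfolding LLe[symmetric] by (simp add: algebra_simps)
  qed
qed


lemma ww_re: "Re (ww m) = \<phi> (of_int m / N) * cos (\<beta> * (of_int m)^2)"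
  by (simp add: ww_def)
lemma ww_im: "Im (ww m) = - (\<phi> (of_int m / N) * sin (\<beta> * (of_int m)^2))"
  by (simp add: ww_def)

lemma ww_diff: assumes n: "n \<in> {-Mi..Mi}"
  shows "norm (ww n - 2 * ww (n-1) + ww (n-2)) \<le> 2 * LL / N^2"
proof -
  note T = trig_diff_bound[OF n]
  have r: "Re (ww n - 2 * ww (n-1) + ww (n-2)) =
     \<phi> (of_int n / N) * cos (\<beta> * (of_int n)^2) - 2 * (\<phi> ((of_int n - 1) / N) * cos (\<beta> * (of_int n - 1)^2))
           + \<phi> ((of_int n - 2) / N) * cos (\<beta> * (of_int n - 2)^2)"
    by (simp add: ww_re)
  have i: "Im (ww n - 2 * ww (n-1) + ww (n-2)) = - (
     \<phi> (of_int n / N) * sin (\<beta> * (of_int n)^2) - 2 * (\<phi> ((of_int n - 1) / N) * sin (\<beta> * (of_int n - 1)^2))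
           + \<phi> ((of_int n - 2) / N) * sin (\<beta> * (of_int n - 2)^2))"
    by (simp add: ww_im)
  have "norm (ww n - 2 * ww (n-1) + ww (n-2)) \<le> \<bar>Re (ww n - 2 * ww (n-1) + ww (n-2))\<bar> + \<bar>Im (ww n - 2 * ww (n-1) + ww (n-2))\<bar>"
    by (rule cmod_le)
  also have "\<dots> \<le> LL / N^2 + LL / N^2"
    unfolding r i abs_minus_cancel using T by (intro add_mono) auto
  finally show ?thesis by simp
qed

lemma S_boundB: "norm (\<Sum>n\<in>{-Mi..Mi}. ww n * cis (of_int n * y)) * norm (1 - cis y)^2 \<le> 26 * LL / N"
proof -
  have "norm (\<Sum>n\<in>{-Mi..Mi}. ww n * cis (of_int n * y)) * norm (1 - cis y)^2
      = norm ((1 - cis y)^2 * (\<Sum>n\<in>{-Mi..Mi}. ww n * cis (of_int n * y)))"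
    by (simp add: norm_mult norm_power)
  also have "\<dots> = norm (\<Sum>n\<in>{-Mi..Mi}. (ww n - 2 * ww (n-1) + ww (n-2)) * cis (of_int n * y))"
    by (subst sbp[of Mi ww]) (use ww_zero Mi_ge in auto)
  also have "\<dots> \<le> (\<Sum>n\<in>{-Mi..Mi}. 2 * LL / N^2)"
    by (rule order_trans[OF norm_sum sum_mono]) (simp add: norm_mult ww_diff)
  also have "\<dots> = (2 * real_of_int Mi + 1) * (2 * LL / N^2)" using Mi_ge(1) by simp
  also have "\<dots> \<le> (13 * N) * (2 * LL / N^2)"
    using Mi_ge(3) LL_nonneg by (intro mult_right_mono) auto
  also have "\<dots> = 26 * LL / N" using N1 by (simp add: field_simps power2_eq_square)
  finally show ?thesis .
qed


lemma core:
  assumes q: "q > 0" and cop: "coprime p q" and qN: "real_of_int q \<le> N"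
  shows "norm (\<Sum>n\<in>{-Mi..Mi}. complex_of_real (\<phi> (of_int n / N)) * cis (- (2 * pi * of_int p / of_int q + \<beta>) * (of_int n)^2) * cis (of_int n * x))
     \<le> sqrt 2 / sqrt (of_int q) * (26 * M + 26 * LL) * N"
proof -
  have q0: "real_of_int q > 0" using q by simp
  have N0: "N > 0" using N1 by simp
  define g where "g n = ee q (- (p * n^2))" for n
  have per: "g n = g (n mod q)" for n
  proof -
    have "(- (p * n^2)) mod q = (- (p * (n mod q)^2)) mod q"
      by (metis mod_minus_cong mod_mult_right_eq power_mod)
    thus ?thesis unfolding g_def using q by (intro ee_cong) auto
  qed
  define G where "G j = (\<Sum>m\<in>{0..<q}. g m * ee q (- (j * m)))" for j
  have Gb: "norm (G j) \<le> sqrt (2 * of_int q)" for j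
  proof -
    have "G j = (\<Sum>m\<in>{0..<q}. ee q (- (p * m^2 + j * m)))"
      unfolding G_def g_def by (intro sum.cong refl) (simp add: ee_add[symmetric] algebra_simps)
    thus ?thesis using gauss_bound[OF q cop, of j] by (simp add: real_le_rsqrt)
  qed
  define S where "S y = (\<Sum>n\<in>{-Mi..Mi}. ww n * cis (of_int n * y))" for y
  define yy where "yy j = x + 2 * pi * of_int j / of_int q" for j
  have term_eq: "complex_of_real (\<phi> (of_int n / N)) * cis (- (2 * pi * of_int p / of_int q + \<beta>) * (of_int n)^2) * cis (of_int n * x)
      = (\<Sum>j\<in>{0..<q}. G j * (ww n * cis (of_int n * yy j))) / of_int q" for n
  proof -
    have c1: "cis (- (2 * pi * of_int p / of_int q + \<beta>) * (of_int n)^2) = g n * cis (- (\<beta> * (of_int n)^2))"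
      unfolding g_def ee_def by (simp add: cis_mult algebra_simps)
    have c2: "ee q (j * n) * cis (of_int n * x) = cis (of_int n * yy j)" for j
      unfolding ee_def yy_def by (simp add: cis_mult algebra_simps)
    have "complex_of_real (\<phi> (of_int n / N)) * cis (- (2 * pi * of_int p / of_int q + \<beta>) * (of_int n)^2) * cis (of_int n * x)
        = ww n * g n * cis (of_int n * x)" unfolding c1 ww_def by (simp add: algebra_simps)
    also have "g n = (\<Sum>j\<in>{0..<q}. G j * ee q (j * n)) / of_int q"
      unfolding G_def by (rule dft_inversion[of q g, OF q per])
    also have "ww n * ((\<Sum>j\<in>{0..<q}. G j * ee q (j * n)) / of_int q) * cis (of_int n * x)
        = (\<Sum>j\<in>{0..<q}. G j * (ww n * (ee q (j * n) * cis (of_int n * x)))) / of_int q"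
      by (simp add: sum_distrib_left sum_distrib_right sum_divide_distrib algebra_simps)
    finally show ?thesis unfolding c2 .
  qed
  have tot: "(\<Sum>n\<in>{-Mi..Mi}. complex_of_real (\<phi> (of_int n / N)) * cis (- (2 * pi * of_int p / of_int q + \<beta>) * (of_int n)^2) * cis (of_int n * x))
      = (\<Sum>j\<in>{0..<q}. G j * S (yy j)) / of_int q"
  proof -
    have "(\<Sum>n\<in>{-Mi..Mi}. complex_of_real (\<phi> (of_int n / N)) * cis (- (2 * pi * of_int p / of_int q + \<beta>) * (of_int n)^2) * cis (of_int n * x))
        = (\<Sum>n\<in>{-Mi..Mi}. \<Sum>j\<in>{0..<q}. G j * (ww n * cis (of_int n * yy j))) / of_int q"
      unfolding term_eq by (simp add: sum_divide_distrib)
    also have "\<dots> = (\<Sum>j\<in>{0..<q}. \<Sum>n\<in>{-Mi..Mi}. G j * (ww n * cis (of_int n * yy j))) / of_int q"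
      by (subst sum.swap) simp
    also have "\<dots> = (\<Sum>j\<in>{0..<q}. G j * S (yy j)) / of_int q"
      by (simp add: S_def sum_distrib_left)
    finally show ?thesis .
  qed
  define v0 where "v0 = of_int q * x / (2 * pi)"
  define r where "r = (\<lambda>j. v0 + of_int j - of_int q * of_int \<lfloor>(v0 + of_int j) / of_int q + 1/2\<rfloor>)"
  define D where "D = (26 * LL / N) * (of_int q)^2 / 4"
  have FD: "norm (S (yy j)) \<le> D / (r j)^2" if rj: "r j \<noteq> 0" for j
  proof -
    define k where "k = \<lfloor>(v0 + of_int j) / of_int q + 1/2\<rfloor>"
    have rk: "r j = v0 + of_int j - of_int q * of_int k" by (simp add: r_def k_def)
    have kb: "of_int k \<le> (v0 + of_int j) / of_int q + 1/2" "(v0 + of_int j) / of_int q + 1/2 < of_int k + 1"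
      unfolding k_def by linarith+
    have e1: "of_int q * ((v0 + of_int j) / of_int q + 1/2) = v0 + of_int j + of_int q / 2"
      using q0 by (simp add: field_simps)
    have "of_int q * of_int k \<le> of_int q * ((v0 + of_int j) / of_int q + 1/2)"
      by (rule mult_left_mono[OF kb(1)]) (use q0 in auto)
    hence "of_int q * of_int k \<le> v0 + of_int j + of_int q / 2" using e1 by simp
    moreover have "v0 + of_int j + of_int q / 2 < of_int q * of_int k + of_int q"
    proof -
      have "of_int q * ((v0 + of_int j) / of_int q + 1/2) < of_int q * (of_int k + 1)"
        by (rule mult_strict_left_mono[OF kb(2) q0])
      thus ?thesis using e1 by (simp add: algebra_simps)
    qed
    ultimately have rb: "\<bar>r j\<bar> \<le> of_int q / 2" unfolding rk by linarith
    define \<theta> where "\<theta> = 2 * pi * r j / of_int q"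
    have cy: "cis (yy j) = cis \<theta>"
    proof -
      have "yy j = \<theta> + 2 * pi * of_int k"
        unfolding yy_def \<theta>_def rk v0_def using q0 by (simp add: field_simps)
      thus ?thesis by (simp add: cis_mult[symmetric] cis_multiple_2pi)
    qed
    have th: "\<bar>\<theta>\<bar> \<le> pi" unfolding \<theta>_def using rb q0 pi_gt_zero
      by (simp add: abs_mult abs_div divide_le_eq field_simps)
    have "norm (1 - cis \<theta>) \<ge> \<bar>\<theta>\<bar> / 3" by (rule norm_1_cis_lower[OF th])
    moreover have "\<bar>\<theta>\<bar> / 3 \<ge> 2 * \<bar>r j\<bar> / of_int q"
    proof -
      have "\<bar>\<theta>\<bar> = 2 * pi * \<bar>r j\<bar> / of_int q" unfolding \<theta>_def using q0 by (simp add: abs_mult abs_div)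
      moreover have "2 * pi * \<bar>r j\<bar> / of_int q \<ge> 2 * 3 * \<bar>r j\<bar> / of_int q"
        using pi_gt3 q0 by (intro divide_right_mono mult_right_mono) auto
      ultimately show ?thesis by simp
    qed
    ultimately have nl: "norm (1 - cis (yy j)) \<ge> 2 * \<bar>r j\<bar> / of_int q" unfolding cy by linarith
    have pos: "2 * \<bar>r j\<bar> / of_int q > 0" using rj q0 by simp
    have sq: "norm (1 - cis (yy j))^2 \<ge> (2 * \<bar>r j\<bar> / of_int q)^2"
      using nl pos by (intro power_mono) auto
    have B: "norm (S (yy j)) * norm (1 - cis (yy j))^2 \<le> 26 * LL / N"
      unfolding S_def by (rule S_boundB)
    have "norm (S (yy j)) * (2 * \<bar>r j\<bar> / of_int q)^2 \<le> 26 * LL / N"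
      using B sq by (smt (verit) mult_left_mono norm_ge_zero)
    moreover have "(2 * \<bar>r j\<bar> / of_int q)^2 = 4 * (r j)^2 / (of_int q)^2"
      by (simp add: power_divide power_mult_distrib)
    ultimately have "norm (S (yy j)) * (4 * (r j)^2 / (of_int q)^2) \<le> 26 * LL / N" by simp
    thus ?thesis unfolding D_def using rj q0 N0
      by (simp add: field_simps)
  qed
  have D0: "D \<ge> 0" unfolding D_def using LL_nonneg N0 by simp
  have sumS: "(\<Sum>j\<in>{0..<q}. norm (S (yy j))) \<le> 2 * (13 * N * M) + 4 * D"
    unfolding r_def
    by (rule fiber_sum[of q "\<lambda>j. norm (S (yy j))" "13 * N * M" v0 D, OF q]) (use FD D0 in \<open>auto simp: S_def S_boundA r_def\<close>)
  have "4 * D \<le> 26 * LL * N"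
  proof -
    have "(of_int q)^2 \<le> N^2" using qN q0 by (intro power_mono) auto
    hence "26 * LL * (of_int q)^2 \<le> 26 * LL * N^2" using LL_nonneg by (intro mult_left_mono) auto
    thus ?thesis unfolding D_def using N0 by (simp add: field_simps power2_eq_square)
  qed
  hence sumS': "(\<Sum>j\<in>{0..<q}. norm (S (yy j))) \<le> (26 * M + 26 * LL) * N" using sumS by (simp add: algebra_simps)
  have "norm ((\<Sum>j\<in>{0..<q}. G j * S (yy j)) / of_int q) = norm (\<Sum>j\<in>{0..<q}. G j * S (yy j)) / of_int q"
    using q0 by (simp add: norm_divide)
  also have "\<dots> \<le> (\<Sum>j\<in>{0..<q}. sqrt (2 * of_int q) * norm (S (yy j))) / of_int q"
    by (intro divide_right_mono order_trans[OF norm_sum sum_mono]) (use Gb q0 in \<open>auto simp: norm_mult intro: mult_right_mono\<close>)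
  also have "\<dots> = sqrt (2 * of_int q) / of_int q * (\<Sum>j\<in>{0..<q}. norm (S (yy j)))"
    by (simp add: sum_distrib_left[symmetric])
  also have "\<dots> \<le> sqrt (2 * of_int q) / of_int q * ((26 * M + 26 * LL) * N)"
    by (rule mult_left_mono[OF sumS']) (use q0 in auto)
  also have "sqrt (2 * of_int q) / of_int q = sqrt 2 / sqrt (of_int q)"
  proof -
    have "sqrt (of_int q) * sqrt (of_int q) = of_int q" using q0 by simp
    thus ?thesis using q0 by (simp add: real_sqrt_mult field_simps)
  qed
  finally show ?thesis unfolding tot by (simp add: mult.assoc)
qed


lemma schrod_core:
  assumes q: "q > 0" and cop: "coprime p q" and qN: "real_of_int q \<le> N"
  shows "norm (schrod_delta \<phi> N (2 * pi * of_int p / of_int q + \<beta>) x)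
     \<le> sqrt 2 / sqrt (of_int q) * (26 * M + 26 * (M * (1 + 34 * b + 256 * b^2))) * N"
proof -
  define t where "t = 2 * pi * of_int p / of_int q + \<beta>"
  define f where "f n = complex_of_real (\<phi> (of_int n / N)) * cis (- t * (of_int n)^2) * cis (of_int n * x)" for n :: int
  have fz: "f n = 0" if "n \<notin> {-Mi..Mi}" for n
  proof -
    have "\<bar>n\<bar> \<ge> Mi - 1" using that by auto
    hence "ww n = 0" by (rule ww_zero)
    hence "\<phi> (of_int n / N) = 0" by (simp add: ww_def)
    thus ?thesis by (simp add: f_def)
  qed
  have "(\<Sum>\<^sub>\<infinity>n::int. f n) = infsum f {-Mi..Mi}"
    by (rule infsum_cong_neutral) (use fz in auto)
  also have "\<dots> = (\<Sum>n\<in>{-Mi..Mi}. f n)" by simp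
  finally have inf: "(\<Sum>\<^sub>\<infinity>n::int. f n) = (\<Sum>n\<in>{-Mi..Mi}. f n)" .
  have "norm (schrod_delta \<phi> N t x) = norm (\<Sum>n\<in>{-Mi..Mi}. f n) / (2 * pi)"
    unfolding schrod_delta_def f_def[symmetric] inf by (simp add: norm_divide)
  also have "\<dots> \<le> norm (\<Sum>n\<in>{-Mi..Mi}. f n)" 
  proof -
    have "norm (\<Sum>n\<in>{-Mi..Mi}. f n) * 1 \<le> norm (\<Sum>n\<in>{-Mi..Mi}. f n) * (2 * pi)"
      using pi_gt3 by (intro mult_left_mono) auto
    thus ?thesis by (simp add: divide_le_eq)
  qed
  also have "\<dots> \<le> sqrt 2 / sqrt (of_int q) * (26 * M + 26 * LL) * N"
    unfolding f_def t_def by (rule core[OF q cop qN])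
  finally show ?thesis unfolding t_def LL_def .
qed


lemma schrod_finite:
  "schrod_delta \<phi> N t x = (\<Sum>n\<in>{-Mi..Mi}. complex_of_real (\<phi> (of_int n / N)) * cis (- t * (of_int n)^2) * cis (of_int n * x)) / complex_of_real (2 * pi)"
proof -
  define f where "f n = complex_of_real (\<phi> (of_int n / N)) * cis (- t * (of_int n)^2) * cis (of_int n * x)" for n :: int
  have fz: "f n = 0" if "n \<notin> {-Mi..Mi}" for n
  proof -
    have "\<bar>n\<bar> \<ge> Mi - 1" using that by auto
    hence "ww n = 0" by (rule ww_zero)
    hence "\<phi> (of_int n / N) = 0" by (simp add: ww_def)
    thus ?thesis by (simp add: f_def)
  qed
  have "(\<Sum>\<^sub>\<infinity>n::int. f n) = infsum f {-Mi..Mi}"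
    by (rule infsum_cong_neutral) (use fz in auto)
  also have "\<dots> = (\<Sum>n\<in>{-Mi..Mi}. f n)" by simp
  finally show ?thesis unfolding schrod_delta_def f_def by simp
qed

lemma schrod_cont: "continuous_on UNIV (\<lambda>t. schrod_delta \<phi> N t x)"
  unfolding schrod_finite by (intro continuous_intros) auto

lemma schrod_bdd: "norm (schrod_delta \<phi> N t x) \<le> 13 * N * M"
proof -
  have "norm (\<Sum>n\<in>{-Mi..Mi}. complex_of_real (\<phi> (of_int n / N)) * cis (- t * (of_int n)^2) * cis (of_int n * x))
      \<le> (\<Sum>n\<in>{-Mi..Mi}. M)"
    by (rule order_trans[OF norm_sum sum_mono]) (simp add: norm_mult phi_bound)
  also have "\<dots> = (2 * real_of_int Mi + 1) * M" using Mi_ge(1) by simp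
  also have "\<dots> \<le> 13 * N * M" using Mi_ge(3) M0 by (intro mult_right_mono) auto
  finally have 1: "norm (\<Sum>n\<in>{-Mi..Mi}. complex_of_real (\<phi> (of_int n / N)) * cis (- t * (of_int n)^2) * cis (of_int n * x)) \<le> 13 * N * M" .
  have "norm (schrod_delta \<phi> N t x) = norm (\<Sum>n\<in>{-Mi..Mi}. complex_of_real (\<phi> (of_int n / N)) * cis (- t * (of_int n)^2) * cis (of_int n * x)) / (2 * pi)"
    unfolding schrod_finite by (simp add: norm_divide)
  also have "\<dots> \<le> norm (\<Sum>n\<in>{-Mi..Mi}. complex_of_real (\<phi> (of_int n / N)) * cis (- t * (of_int n)^2) * cis (of_int n * x))"
  proof -
    have "norm (\<Sum>n\<in>{-Mi..Mi}. complex_of_real (\<phi> (of_int n / N)) * cis (- t * (of_int n)^2) * cis (of_int n * x)) * 1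
       \<le> norm (\<Sum>n\<in>{-Mi..Mi}. complex_of_real (\<phi> (of_int n / N)) * cis (- t * (of_int n)^2) * cis (of_int n * x)) * (2 * pi)"
      using pi_gt3 by (intro mult_left_mono) auto
    thus ?thesis by (simp add: divide_le_eq)
  qed
  finally show ?thesis using 1 by linarith
qed

end


theorem lemma6p2:
  fixes \<phi> :: "real \<Rightarrow> real" and T :: real
  assumes "admissible_cutoff \<phi>" and "T > 0"
  shows "\<exists>C c::real. c > 0 \<and>
    (\<forall>k::nat. measure lebesgue
        {t \<in> {0..T}. Linf_T (schrod_delta \<phi> (2 ^ k) t) \<le> C * sqrt (2 ^ k)} \<ge> c)"
proof -
  note adm = assms(1)
  have T0: "T > 0" by fact
  obtain M where M0: "M \<ge> 0" and Mb: "\<And>x. \<bar>x\<bar> \<le> 8 \<Longrightarrow> \<bar>\<phi> x\<bar> \<le> M \<and> \<bar>deriv \<phi> x\<bar> \<le> M \<and> \<bar>deriv (deriv \<phi>) x\<bar> \<le> M"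
    using adm_bound[OF adm] by blast
  define K :: int where "K = \<lceil>T / (2 * pi)\<rceil> + 1"
  have K1: "real_of_int K \<ge> T / (2 * pi) + 1" unfolding K_def using ceiling_correct[of "T / (2 * pi)"] by simp
  have Kpos: "real_of_int K \<ge> 1" using K1 T0 by (smt (verit) divide_nonneg_nonneg pi_gt_zero)
  define c where "c = T / (8 * pi * (of_int K + 2))"
  have c0: "c > 0" unfolding c_def using T0 Kpos by simp
  define b where "b = 2 * pi / c"
  have b0: "b \<ge> 0" unfolding b_def using c0 by simp
  define X where "X = 26 * M + 26 * (M * (1 + 34 * b + 256 * b^2))"
  have X0: "X \<ge> 0" unfolding X_def using M0 b0 by simp
  define C where "C = sqrt 2 * X / sqrt c"
  show ?thesis
  proof (intro exI conjI allI)
    show "T / 2 > 0" using T0 by simp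
    fix k :: nat
    define Nn :: nat where "Nn = 2 ^ k"
    define N :: real where "N = real Nn"
    have N1: "N \<ge> 1" unfolding N_def Nn_def by simp
    have N0: "N > 0" using N1 by simp
    define Q where "Q = {1..\<lfloor>c * N\<rfloor>}"
    define P where "P q = {-q..q*K}" for q :: int
    define I where "I p q = {2 * pi * of_int p/of_int q - 2 * pi/(of_int q*N) .. 2 * pi * of_int p/of_int q + 2 * pi/(of_int q*N)}" for p q :: int
    define Bad where "Bad = (\<Union>q\<in>Q. \<Union>p\<in>P q. I p q)"
    define A where "A = {t\<in>{0..T}. Linf_T (schrod_delta \<phi> N t) \<le> C * sqrt N}"
    have finQ: "finite Q" unfolding Q_def by simp
    have finP: "finite (P q)" for q unfolding P_def by simp
    have Bad_meas: "Bad \<in> lmeasurable"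
      unfolding Bad_def I_def using finQ finP by (intro fmeasurable.finite_UN) auto
    have mI: "measure lebesgue (I p q) = 4 * pi / (of_int q * N)" if "q \<ge> 1" for p q
    proof -
      have "2 * pi / (of_int q * N) \<ge> 0" using that N0 by simp
      thus ?thesis unfolding I_def by simp
    qed
    have Bad_le: "measure lebesgue Bad \<le> T / 2"
    proof -
      have "measure lebesgue Bad \<le> (\<Sum>q\<in>Q. measure lebesgue (\<Union>p\<in>P q. I p q))"
        unfolding Bad_def using finQ finP by (intro measure_UNION_le) (auto simp: I_def)
      also have "\<dots> \<le> (\<Sum>q\<in>Q. \<Sum>p\<in>P q. measure lebesgue (I p q))"
        using finP by (intro sum_mono measure_UNION_le) (auto simp: I_def)
      also have "\<dots> \<le> (\<Sum>q\<in>Q. 4 * pi * (of_int K + 2) / N)"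
      proof (rule sum_mono)
        fix q assume "q \<in> Q"
        hence q1: "q \<ge> 1" by (simp add: Q_def)
        have "(\<Sum>p\<in>P q. measure lebesgue (I p q)) = real (card (P q)) * (4 * pi / (of_int q * N))"
          using mI[OF q1] by simp
        also have "real (card (P q)) = of_int (q * K + q + 1)"
          unfolding P_def using q1 Kpos by simp
        also have "of_int (q * K + q + 1) * (4 * pi / (of_int q * N)) \<le> (of_int q * (of_int K + 2)) * (4 * pi / (of_int q * N))"
        proof (rule mult_right_mono)
          have "real_of_int q \<ge> 1" using q1 by simp
          thus "(of_int (q * K + q + 1) :: real) \<le> of_int q * (of_int K + 2)" by (simp add: algebra_simps)
        qed (use q1 N0 in auto)
        also have "\<dots> = 4 * pi * (of_int K + 2) / N" using q1 N0 by (simp add: field_simps)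
        finally show "(\<Sum>p\<in>P q. measure lebesgue (I p q)) \<le> 4 * pi * (of_int K + 2) / N" .
      qed
      also have "\<dots> = real (card Q) * (4 * pi * (of_int K + 2) / N)" by simp
      also have "\<dots> \<le> (c * N) * (4 * pi * (of_int K + 2) / N)"
      proof (rule mult_right_mono)
        have "real (card Q) = real (nat \<lfloor>c * N\<rfloor>)" unfolding Q_def by simp
        also have "\<dots> \<le> c * N" using c0 N0 by (simp add: mult_nonneg_nonneg)
        finally show "real (card Q) \<le> c * N" .
      qed (use Kpos N0 in auto)
      also have "\<dots> = T / 2"
      proof -
        have d: "pi * (of_int K + 2) > 0" using Kpos by simp
        have "(c * N) * (4 * pi * (of_int K + 2) / N) = c * (4 * (pi * (of_int K + 2)))" using N0 by simp
        also have "\<dots> = T / 2" unfolding c_def using d by (simp add: field_simps)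
        finally show ?thesis .
      qed
      finally show ?thesis .
    qed
    have good: "{0..T} - Bad \<subseteq> A"
    proof
      fix t assume t: "t \<in> {0..T} - Bad"
      obtain h q where cop: "coprime h q" and q0: "0 < q" and qN: "q \<le> int Nn"
          and ap: "\<bar>of_int q * (t / (2 * pi)) - of_int h\<bar> < 1 / real Nn"
        using Dirichlet_approx_coprime[of Nn "t / (2 * pi)"] unfolding Nn_def by auto
      have qr: "real_of_int q > 0" using q0 by simp
      define \<beta> where "\<beta> = t - 2 * pi * of_int h / of_int q"
      have tb: "t = 2 * pi * of_int h / of_int q + \<beta>" unfolding \<beta>_def by simp
      have betab: "\<bar>\<beta>\<bar> < 2 * pi / (of_int q * N)"
      proof -
        have "\<beta> = 2 * pi * (of_int q * (t / (2 * pi)) - of_int h) / of_int q"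
          unfolding \<beta>_def using qr by (simp add: field_simps)
        hence "\<bar>\<beta>\<bar> = 2 * pi * \<bar>of_int q * (t / (2 * pi)) - of_int h\<bar> / of_int q"
          using qr by (simp add: abs_mult abs_div)
        also have "\<dots> < 2 * pi * (1 / N) / of_int q"
          using ap qr unfolding N_def by (intro divide_strict_right_mono mult_strict_left_mono) auto
        finally show ?thesis using qr N0 by (simp add: field_simps)
      qed
      have qbig: "real_of_int q > c * N"
      proof (rule ccontr)
        assume "\<not> real_of_int q > c * N"
        hence "q \<in> Q" unfolding Q_def using q0 by (simp add: le_floor_iff)
        moreover have "h \<in> P q"
        proof -
          have N1': "1 / real Nn \<le> 1" using N1 unfolding N_def by simp
          have th: "0 \<le> t / (2 * pi)" "t / (2 * pi) \<le> T / (2 * pi)" using t by (auto intro: divide_right_mono)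
          have "of_int h > of_int q * (t / (2 * pi)) - 1" using ap N1' by linarith
          moreover have "of_int q * (t / (2 * pi)) \<ge> 0" using th qr by (intro mult_nonneg_nonneg) auto
          ultimately have h1: "h \<ge> -q" using q0 by linarith
          have "of_int h < of_int q * (t / (2 * pi)) + 1" using ap N1' by linarith
          also have "of_int q * (t / (2 * pi)) \<le> of_int q * (of_int K - 1)"
            using th K1 qr by (intro mult_left_mono) auto
          finally have "(of_int h :: real) < of_int q * of_int K - of_int q + 1" by (simp add: algebra_simps)
          hence "(of_int h :: real) < of_int (q * K - q + 1)" by simp
          hence "h < q * K - q + 1" by (simp only: of_int_less_iff)
          hence h2: "h \<le> q * K" using q0 by linarith
          show ?thesis unfolding P_def using h1 h2 by auto
        qed
        moreover have "t \<in> I h q" unfolding I_def using betab tb by auto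
        ultimately have "t \<in> Bad" unfolding Bad_def by blast
        thus False using t by auto
      qed
      have bN: "\<bar>\<beta>\<bar> * N^2 \<le> b"
      proof -
        have "\<bar>\<beta>\<bar> * N^2 \<le> 2 * pi / (of_int q * N) * N^2"
          using betab N0 by (intro mult_right_mono) auto
        also have "\<dots> = 2 * pi * N / of_int q" using N0 qr by (simp add: field_simps power2_eq_square)
        also have "\<dots> \<le> 2 * pi / c"
          using qbig c0 N0 qr by (simp add: field_simps)
        finally show ?thesis unfolding b_def .
      qed
      have pt: "norm (schrod_delta \<phi> N t x) \<le> C * sqrt N" for x
      proof -
        have "norm (schrod_delta \<phi> N t x) \<le> sqrt 2 / sqrt (of_int q) * X * N"
          unfolding tb X_def
          by (rule schrod_core[where b = b and M = M]) (use adm N1 bN b0 M0 Mb q0 cop qN in \<open>auto simp: N_def\<close>)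
        also have "\<dots> \<le> sqrt 2 / (sqrt c * sqrt N) * X * N"
        proof -
          have "sqrt c * sqrt N \<le> sqrt (of_int q)" using qbig by (simp add: real_sqrt_mult[symmetric])
          moreover have "sqrt c * sqrt N > 0" using c0 N0 by simp
          moreover have "sqrt (of_int q) > 0" using qr by simp
          ultimately have "sqrt 2 / sqrt (of_int q) \<le> sqrt 2 / (sqrt c * sqrt N)"
            by (intro divide_left_mono mult_pos_pos) (use c0 N0 in auto)
          thus ?thesis using X0 N0 by (intro mult_right_mono) auto
        qed
        also have "\<dots> = C * sqrt N"
        proof -
          have "sqrt N * sqrt N = N" using N0 by simp
          thus ?thesis unfolding C_def using c0 N0 by (simp add: field_simps)
        qed
        finally show ?thesis .
      qed
      have "Linf_T (schrod_delta \<phi> N t) \<le> C * sqrt N"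
        unfolding Linf_T_def by (rule cSUP_least) (use pt in auto)
      thus "t \<in> A" using t unfolding A_def by auto
    qed
    have bdd: "bdd_above ((\<lambda>x. norm (schrod_delta \<phi> N t x)) ` {0..2 * pi})" for t
    proof -
      have "norm (schrod_delta \<phi> N t x) \<le> 13 * N * M" for x
        by (rule schrod_bdd[where \<beta> = 0 and b = 0]) (use adm N1 M0 Mb in auto)
      thus ?thesis by (intro bdd_aboveI) auto
    qed
    have Aeq: "A = {0..T} \<inter> (\<Inter>x\<in>{0..2 * pi}. {t. norm (schrod_delta \<phi> N t x) \<le> C * sqrt N})"
      unfolding A_def Linf_T_def using bdd by (auto simp: cSUP_le_iff)
    have cont: "continuous_on UNIV (\<lambda>t. schrod_delta \<phi> N t x)" for x
      by (rule schrod_cont[where \<beta> = 0 and b = 0 and M = M]) (use adm N1 M0 Mb in auto)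
    have "closed (\<Inter>x\<in>{0..2 * pi}. {t. norm (schrod_delta \<phi> N t x) \<le> C * sqrt N})"
      by (intro closed_INT ballI closed_Collect_le continuous_on_norm cont continuous_on_const)
    hence "compact A" unfolding Aeq by (intro compact_Int_closed) auto
    hence A_meas: "A \<in> lmeasurable" by (rule lmeasurable_compact)
    have "T - T / 2 \<le> measure lebesgue {0..T} - measure lebesgue Bad"
      using Bad_le T0 by simp
    also have "\<dots> \<le> measure lebesgue ({0..T} - Bad)"
      by (rule measure_diff_le_measure_setdiff) (use Bad_meas in auto)
    also have "\<dots> \<le> measure lebesgue A"
      by (rule measure_mono_fmeasurable[OF good]) (use Bad_meas A_meas in auto)
    finally have "measure lebesgue A \<ge> T / 2" by simp
    thus "measure lebesgue {t \<in> {0..T}. Linf_T (schrod_delta \<phi> (2 ^ k) t) \<le> C * sqrt (2 ^ k)} \<ge> T / 2"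
      unfolding A_def N_def Nn_def by simp
  qed
qed


end
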